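(* Let $n,m$ be positive integers and $\mathbf{r}=(r_1,\dots,r_m)$, $\mathbf{s}=(s_1,\dots,s_m)$ sequences of nonnegative integers with sums $r$ and $s$. Then \begin{multline*} \sum_{d_0,d_1,\dots,d_{n}\ge 0} |\mathrm{SB}(n,\mathbf{r},\mathbf{s};d_0,d_1,\dots,d_{n})| \frac{t_0^{d_0} t_1^{d_1} \cdots t_{n}^{d_{n}}}{d_0!d_1!\cdots d_{n}!} =\prod_{i=1}^n (t_0 + t_{1} +\dots + t_{i-1})^r (t_i + t_{i+1} +\dots + t_{n})^s\\ \times \prod_{i=1}^m (t_0+t_1+\dots+t_n)^{r_is_i} \prod_{1\le i<j\le n} \left(t_i + t_{i+1} +\dots + t_{j-1}\right)^m. \end{multline*}
   Context: For nonnegative integers $p,q$, the $(n,p,q)$-staircase is the set of cells $(i,j)$ with $1\le i\le p+n$, $1\le j\le n+q$, $i\le j+p$; the cell $(j+p,j)$ ($1\le j\le n$) is its $j$th diagonal cell (row $i>p$ contains $(i,i-p)$, column $j\le n$ contains $(j+p,j)$, other rows/columns contain no diagonal cell). Take pages = the $(n,r_i,s_i)$-staircases, $1\le i\le m$, identifying the $j$th diagonal cells of all pages for each $j$. An $(n,\mathbf{r},\mathbf{s})$-Selberg book is a filling of the resulting cells with $1,\dots,N$, $N=(r+s+1)n+m\binom n2+\sum_i r_is_i$, each used once, such that in each page every non-diagonal cell has entry larger than that of the diagonal cell in its row (if any) and smaller than that of the diagonal cell in its column (if any). With $e_j$ the entry of the $j$th diagonal cell, $e_0=0$, $e_{n+1}=N+1$,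 $\mathrm{SB}(n,\mathbf{r},\mathbf{s};d_0,\dots,d_n)$ is the set of such books with $d_j=e_{j+1}-e_j-1$ for $j=0,\dots,n$. *)

theory Defs
  imports "HOL-Analysis.Analysis"
begin

text \<open>Cells of a Selberg book: the shared diagonal cells \<open>SDiag j\<close> (1 \<le> j \<le> n),
  and the non-diagonal cells \<open>SOff k i j\<close> = cell (i,j) of page k (1 \<le> k \<le> m).\<close>
datatype sb_cell = SDiag nat | SOff nat nat nat

definition sb_cells :: "nat \<Rightarrow> nat \<Rightarrow> (nat \<Rightarrow> nat) \<Rightarrow> (nat \<Rightarrow> nat) \<Rightarrow> sb_cell set" where
  "sb_cells n m r s =
     SDiag ` {1..n} \<union>
     {SOff k i j | k i j. k \<in> {1..m} \<and> 1 \<le> i \<and> i \<le> r k + n \<and> 1 \<le> j \<and> j \<le> n + s k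
                        \<and> i \<le> j + r k \<and> i \<noteq> j + r k}"

definition sb_N :: "nat \<Rightarrow> nat \<Rightarrow> (nat \<Rightarrow> nat) \<Rightarrow> (nat \<Rightarrow> nat) \<Rightarrow> nat" where
  "sb_N n m r s = (sum r {1..m} + sum s {1..m} + 1) * n + m * (n choose 2)
                  + (\<Sum>i=1..m. r i * s i)"

definition sb_e :: "nat \<Rightarrow> nat \<Rightarrow> (nat \<Rightarrow> nat) \<Rightarrow> (nat \<Rightarrow> nat) \<Rightarrow> (sb_cell \<Rightarrow> nat) \<Rightarrow> nat \<Rightarrow> nat" where
  "sb_e n m r s F j = (if j = 0 then 0 else if j = n + 1 then sb_N n m r s + 1 else F (SDiag j))"

text \<open>Selberg books, as fillings F (set to 0 outside the cells, so that they are
  determined by their values on the cells).\<close>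
definition selberg_book :: "nat \<Rightarrow> nat \<Rightarrow> (nat \<Rightarrow> nat) \<Rightarrow> (nat \<Rightarrow> nat) \<Rightarrow> (sb_cell \<Rightarrow> nat) \<Rightarrow> bool" where
  "selberg_book n m r s F \<longleftrightarrow>
     bij_betw F (sb_cells n m r s) {1..sb_N n m r s} \<and>
     (\<forall>c. c \<notin> sb_cells n m r s \<longrightarrow> F c = 0) \<and>
     (\<forall>k i j. SOff k i j \<in> sb_cells n m r s \<longrightarrow>
         (r k < i \<longrightarrow> F (SOff k i j) > F (SDiag (i - r k))) \<and>
         (j \<le> n \<longrightarrow> F (SOff k i j) < F (SDiag j)))"

definition SB :: "nat \<Rightarrow> nat \<Rightarrow> (nat \<Rightarrow> nat) \<Rightarrow> (nat \<Rightarrow> nat) \<Rightarrow> (nat \<Rightarrow> nat) \<Rightarrow> (sb_cell \<Rightarrow> nat) set" where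
  "SB n m r s d = {F. selberg_book n m r s F \<and>
       (\<forall>j\<le>n. d j = sb_e n m r s F (j + 1) - sb_e n m r s F j - 1)}"

end

theory Submission imports Defs begin

lemma card_bij_ext:
  assumes "finite S" "finite T" "card S = card T"
  shows "card {f \<in> S \<rightarrow>\<^sub>E T. bij_betw f S T} = fact (card S)"
  using assms
proof (induction S arbitrary: T rule: finite_induct)
  case empty
  then have "T = {}" by auto
  then have e: "{f \<in> {} \<rightarrow>\<^sub>E T. bij_betw f {} T} = {\<lambda>_. undefined}"
    by (auto simp: bij_betw_def)
  have "card {f \<in> {} \<rightarrow>\<^sub>E T. bij_betw f {} T} = 1" by (simp only: e) simp
  then show ?case by simp
next
  case (insert x S)
  define Q where "Q y = (\<lambda>g. g(x:=y)) ` {g \<in> S \<rightarrow>\<^sub>E (T - {y}). bij_betw g S (T - {y})}" for y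
  have eq: "{f \<in> insert x S \<rightarrow>\<^sub>E T. bij_betw f (insert x S) T} = (\<Union>y\<in>T. Q y)"
  proof (intro equalityI subsetI)
    fix f assume f: "f \<in> {f \<in> insert x S \<rightarrow>\<^sub>E T. bij_betw f (insert x S) T}"
    then have fx: "f x \<in> T" by auto
    have b: "bij_betw f (insert x S) T" using f by auto
    have inj: "inj_on f (insert x S)" using b by (auto simp: bij_betw_def)
    have im: "f ` (insert x S) = T" using b by (auto simp: bij_betw_def)
    have nx: "f x \<notin> f ` S" using inj insert(2) by (auto simp: inj_on_def)
    have "f ` S = T - {f x}" using im nx by (auto simp: image_iff)
    then have b2: "bij_betw f S (T - {f x})" using inj by (auto simp: bij_betw_def inj_on_insert)
    have b3: "bij_betw (f(x:=undefined)) S (T - {f x})"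
      using b2 insert(2) by (subst bij_betw_cong[where g=f]) auto
    have "f(x:=undefined) \<in> S \<rightarrow>\<^sub>E (T - {f x})"
      using f b2 insert(2) by (auto simp: PiE_def extensional_def bij_betw_def)
    moreover have "f = (f(x:=undefined))(x := f x)" by simp
    ultimately have "f \<in> Q (f x)" unfolding Q_def using b3 by blast
    then show "f \<in> (\<Union>y\<in>T. Q y)" using fx by blast
  next
    fix f assume "f \<in> (\<Union>y\<in>T. Q y)"
    then obtain y g where y: "y \<in> T" and g: "g \<in> S \<rightarrow>\<^sub>E (T - {y})" "bij_betw g S (T - {y})"
      and fg: "f = g(x:=y)" unfolding Q_def by blast
    have "bij_betw f S (T - {y})" using g(2) insert(2) fg by (subst bij_betw_cong[where g=g]) auto
    then have "bij_betw f (insert x S) T" using fg y insert(2)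
      by (auto simp: bij_betw_def inj_on_insert)
    moreover have "f \<in> insert x S \<rightarrow>\<^sub>E T" using g y fg insert(2) by (auto simp: PiE_def extensional_def)
    ultimately show "f \<in> {f \<in> insert x S \<rightarrow>\<^sub>E T. bij_betw f (insert x S) T}" by blast
  qed
  have cQ: "card (Q y) = fact (card S)" if "y \<in> T" for y
  proof -
    have "inj_on (\<lambda>g. g(x:=y)) {g \<in> S \<rightarrow>\<^sub>E (T - {y}). bij_betw g S (T - {y})}"
    proof (rule inj_onI)
      fix g h assume "g \<in> {g \<in> S \<rightarrow>\<^sub>E (T - {y}). bij_betw g S (T - {y})}"
        "h \<in> {g \<in> S \<rightarrow>\<^sub>E (T - {y}). bij_betw g S (T - {y})}" "g(x:=y) = h(x:=y)"
      then show "g = h" using insert(2) by (auto simp: PiE_def extensional_def fun_eq_iff) metis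
    qed
    then have "card (Q y) = card {g \<in> S \<rightarrow>\<^sub>E (T - {y}). bij_betw g S (T - {y})}"
      unfolding Q_def by (rule card_image)
    also have "\<dots> = fact (card S)"
      using insert that by (intro insert.IH) auto
    finally show ?thesis .
  qed
  have fQ: "finite (Q y)" for y unfolding Q_def using insert by (intro finite_imageI finite_subset[OF _ finite_PiE[of S "\<lambda>_. T - {y}"]]) auto
  have dQ: "Q y \<inter> Q z = {}" if "y \<noteq> z" for y z
    using that unfolding Q_def by (auto simp: fun_eq_iff) metis
  have "card (\<Union>y\<in>T. Q y) = (\<Sum>y\<in>T. card (Q y))"
    using insert fQ dQ by (intro card_UN_disjoint) auto
  also have "\<dots> = card T * fact (card S)" using cQ by simp
  moreover have "card (insert x S) = Suc (card S)" using insert by simp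
  ultimately show ?case using eq insert.prems by (simp add: algebra_simps)
qed


lemma mono_from_step:
  fixes e :: "nat \<Rightarrow> nat"
  assumes "\<And>j. j \<le> n \<Longrightarrow> e j < e (Suc j)" "i < j" "j \<le> Suc n"
  shows "e i < e j"
  using assms(2,3)
proof (induction j)
  case 0 then show ?case by simp
next
  case (Suc j)
  show ?case
  proof (cases "i = j")
    case True then show ?thesis using assms(1) Suc by simp
  next
    case False
    then have "e i < e j" using Suc by simp
    also have "e j < e (Suc j)" using assms(1) Suc by simp
    finally show ?thesis .
  qed
qed

lemma card_below:
  fixes e :: "nat \<Rightarrow> nat"
  assumes mono: "\<And>i j. i < j \<Longrightarrow> j \<le> Suc n \<Longrightarrow> e i < e j"
    and "g \<le> n" "e g < v" "v < e (Suc g)"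
  shows "card {j\<in>{1..n}. e j < v} = g"
proof -
  have "{j\<in>{1..n}. e j < v} = {1..g}"
  proof (intro equalityI subsetI)
    fix j assume j: "j \<in> {j\<in>{1..n}. e j < v}"
    show "j \<in> {1..g}"
    proof (rule ccontr)
      assume "j \<notin> {1..g}"
      then have "Suc g \<le> j" using j by auto
      then have "e (Suc g) \<le> e j" using mono[of "Suc g" j] j by (cases "Suc g = j") auto
      then show False using j assms by auto
    qed
  next
    fix j assume j: "j \<in> {1..g}"
    then have "e j \<le> e g" using mono[of j g] assms(2) by (cases "j = g") auto
    then show "j \<in> {j\<in>{1..n}. e j < v}" using j assms by auto
  qed
  then show ?thesis by simp
qed

locale bk =
  fixes n :: nat and Off :: "'a set" and diag :: "nat \<Rightarrow> 'a" and lo hi :: "'a \<Rightarrow> nat"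
  assumes fin: "finite Off"
  and dinj: "inj_on diag {1..n}"
  and disj: "\<And>j. j \<in> {1..n} \<Longrightarrow> diag j \<notin> Off"
  and lohi: "\<And>c. c \<in> Off \<Longrightarrow> lo c \<le> hi c \<and> hi c \<le> n"
  and chain: "\<And>j. 1 \<le> j \<Longrightarrow> j < n \<Longrightarrow> \<exists>c\<in>Off. lo c = j \<and> hi c = j"
begin

definition "Cells = diag ` {1..n} \<union> Off"
definition "NN = n + card Off"
definition "book F \<longleftrightarrow> bij_betw F Cells {1..NN} \<and> (\<forall>c. c \<notin> Cells \<longrightarrow> F c = 0) \<and>
   (\<forall>c\<in>Off. (1 \<le> lo c \<longrightarrow> F (diag (lo c)) < F c) \<and> (hi c < n \<longrightarrow> F c < F (diag (Suc (hi c)))))"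
definition "ee F j = (if j = 0 then 0 else if j = n+1 then NN + 1 else F (diag j))"
definition "dd F j = ee F (j+1) - ee F j - 1"
definition "gap F c = card {j\<in>{1..n}. ee F j < F c}"

lemma finCells: "finite Cells" unfolding Cells_def using fin by simp

lemma card_Cells: "card Cells = NN"
proof -
  have "card Cells = card (diag ` {1..n}) + card Off"
    unfolding Cells_def using fin disj by (intro card_Un_disjoint) auto
  also have "card (diag ` {1..n}) = n" using dinj by (simp add: card_image)
  finally show ?thesis unfolding NN_def by simp
qed

lemma book_range: "book F \<Longrightarrow> c \<in> Cells \<Longrightarrow> F c \<in> {1..NN}"
  unfolding book_def bij_betw_def by auto

lemma book_step: assumes "book F" "j \<le> n" shows "ee F j < ee F (Suc j)"
proof -
  have dc: "diag i \<in> Cells" if "i \<in> {1..n}" for i using that unfolding Cells_def by auto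
  consider "j = 0" | "j = n" "j \<ge> 1" | "1 \<le> j" "j < n" using assms by linarith
  then show ?thesis
  proof cases
    case 1
    then show ?thesis using book_range[OF assms(1) dc[of 1]] by (auto simp: ee_def)
  next
    case 2
    then show ?thesis using book_range[OF assms(1) dc[of n]] by (auto simp: ee_def)
  next
    case 3
    then obtain c where c: "c \<in> Off" "lo c = j" "hi c = j" using chain by blast
    then have "F (diag j) < F c" "F c < F (diag (Suc j))" using assms(1) 3 unfolding book_def by auto
    then show ?thesis using 3 by (auto simp: ee_def)
  qed
qed

lemma book_mono: "book F \<Longrightarrow> i < j \<Longrightarrow> j \<le> Suc n \<Longrightarrow> ee F i < ee F j"
  using mono_from_step[of n "ee F"] book_step by blast

lemma book_gap:
  assumes F: "book F" and c: "c \<in> Off"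
  shows "gap F c \<le> n \<and> ee F (gap F c) < F c \<and> F c < ee F (Suc (gap F c))"
proof -
  have cC: "c \<in> Cells" using c unfolding Cells_def by auto
  have v: "F c \<in> {1..NN}" using book_range[OF F cC] .
  have nd: "F c \<noteq> ee F j" if "j \<in> {1..n}" for j
  proof
    assume "F c = ee F j"
    then have "F c = F (diag j)" using that by (auto simp: ee_def)
    moreover have "diag j \<in> Cells" using that unfolding Cells_def by auto
    moreover have "inj_on F Cells" using F unfolding book_def bij_betw_def by auto
    ultimately have "c = diag j" using cC by (auto simp: inj_on_def)
    then show False using disj[OF that] c by simp
  qed
  define S where "S = {j\<in>{0..n}. ee F j < F c}"
  have S0: "0 \<in> S" using v unfolding S_def by (auto simp: ee_def)
  have fS: "finite S" unfolding S_def by simp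
  define g where "g = Max S"
  have gS: "g \<in> S" unfolding g_def using S0 fS by (intro Max_in) auto
  then have g1: "g \<le> n" "ee F g < F c" unfolding S_def by auto
  have g2: "F c < ee F (Suc g)"
  proof (cases "g = n")
    case True then show ?thesis using v by (auto simp: ee_def)
  next
    case False
    then have "Suc g \<notin> S" using fS gS unfolding g_def by (metis Max_ge Suc_n_not_le_n)
    then have "F c \<le> ee F (Suc g)" using False g1 unfolding S_def by auto
    moreover have "F c \<noteq> ee F (Suc g)" using nd[of "Suc g"] False g1 by auto
    ultimately show ?thesis by simp
  qed
  have "gap F c = g" unfolding gap_def
    by (rule card_below[OF _ g1 g2]) (rule book_mono[OF F])
  then show ?thesis using g1 g2 by simp
qed

lemma book_gap_range:
  assumes F: "book F" and c: "c \<in> Off"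
  shows "gap F c \<in> {lo c..hi c}"
proof -
  note g = book_gap[OF F c]
  have "lo c \<le> gap F c"
  proof (rule ccontr)
    assume a: "\<not> lo c \<le> gap F c"
    then have "F (diag (lo c)) < F c" using F c unfolding book_def by auto
    moreover have "ee F (lo c) = F (diag (lo c))" using a g lohi[OF c] by (auto simp: ee_def)
    moreover have "ee F (Suc (gap F c)) \<le> ee F (lo c)"
      using book_mono[OF F, of "Suc (gap F c)" "lo c"] a lohi[OF c] by (cases "Suc (gap F c) = lo c") auto
    ultimately show False using g by simp
  qed
  moreover have "gap F c \<le> hi c"
  proof (rule ccontr)
    assume a: "\<not> gap F c \<le> hi c"
    then have "F c < F (diag (Suc (hi c)))" using F c g unfolding book_def by auto
    moreover have "ee F (Suc (hi c)) = F (diag (Suc (hi c)))" using a g by (auto simp: ee_def)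
    moreover have "ee F (Suc (hi c)) \<le> ee F (gap F c)"
      using book_mono[OF F, of "Suc (hi c)" "gap F c"] a g by (cases "Suc (hi c) = gap F c") auto
    ultimately show False using g by simp
  qed
  ultimately show ?thesis by simp
qed

lemma book_block:
  assumes F: "book F" and g: "g \<le> n"
  shows "bij_betw F {c\<in>Off. gap F c = g} {ee F g<..<ee F (Suc g)}"
proof -
  have inj: "inj_on F Cells" and im: "F ` Cells = {1..NN}" using F unfolding book_def bij_betw_def by auto
  have sub: "{c\<in>Off. gap F c = g} \<subseteq> Cells" unfolding Cells_def by auto
  have "F ` {c\<in>Off. gap F c = g} = {ee F g<..<ee F (Suc g)}"
  proof (intro equalityI subsetI)
    fix v assume "v \<in> F ` {c\<in>Off. gap F c = g}"
    then show "v \<in> {ee F g<..<ee F (Suc g)}" using book_gap[OF F] by auto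
  next
    fix v assume v: "v \<in> {ee F g<..<ee F (Suc g)}"
    have "ee F (Suc g) \<le> NN + 1"
    proof (cases "Suc g = n + 1")
      case True then show ?thesis by (simp add: ee_def)
    next
      case False
      then have "ee F (Suc g) < ee F (n+1)" using book_mono[OF F, of "Suc g" "n+1"] g by simp
      then show ?thesis by (simp add: ee_def)
    qed
    then have "v \<in> {1..NN}" using v by auto
    then obtain c where c: "c \<in> Cells" "v = F c" using im by (metis imageE)
    have "c \<in> Off"
    proof (rule ccontr)
      assume "c \<notin> Off"
      then obtain j where j: "j \<in> {1..n}" "c = diag j" using c unfolding Cells_def by auto
      then have "v = ee F j" using c by (simp add: ee_def)
      moreover have "ee F j \<le> ee F g \<or> ee F (Suc g) \<le> ee F j"
      proof (cases "j \<le> g")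
        case True then show ?thesis using book_mono[OF F, of j g] g by (cases "j = g") auto
      next
        case False then show ?thesis using book_mono[OF F, of "Suc g" j] j by (cases "j = Suc g") auto
      qed
      ultimately show False using v by auto
    qed
    moreover have "gap F c = g" unfolding gap_def
      by (rule card_below[OF _ g]) (use v c book_mono[OF F] in auto)
    ultimately show "v \<in> F ` {c\<in>Off. gap F c = g}" using c by auto
  qed
  moreover have "inj_on F {c\<in>Off. gap F c = g}" using inj sub by (rule inj_on_subset)
  ultimately show ?thesis by (simp add: bij_betw_def)
qed

definition "cnt \<gamma> g = card {c\<in>Off. \<gamma> c = g}"

lemma book_dd: assumes F: "book F" and g: "g \<le> n" shows "dd F g = cnt (gap F) g"
proof -
  have "cnt (gap F) g = card {ee F g<..<ee F (Suc g)}"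
    unfolding cnt_def using book_block[OF F g] by (rule bij_betw_same_card)
  then show ?thesis by (simp add: dd_def)
qed

definition "EE \<gamma> j = j + (\<Sum>g<j. cnt \<gamma> g)"

lemma EE_mono: "i < j \<Longrightarrow> EE \<gamma> i < EE \<gamma> j"
proof (induction j)
  case 0 then show ?case by simp
next
  case (Suc j) then show ?case by (cases "i = j") (auto simp: EE_def)
qed

lemma EE_mono': "i \<le> j \<Longrightarrow> EE \<gamma> i \<le> EE \<gamma> j"
  using EE_mono[of i j \<gamma>] by (cases "i = j") auto

lemma book_ee_EE: assumes F: "book F" shows "j \<le> Suc n \<Longrightarrow> ee F j = EE (gap F) j"
proof (induction j)
  case 0 then show ?case by (simp add: ee_def EE_def)
next
  case (Suc j)
  have "ee F j < ee F (Suc j)" using book_step[OF F, of j] Suc.prems by simp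
  then have "ee F (Suc j) = ee F j + dd F j + 1" by (simp add: dd_def)
  also have "dd F j = cnt (gap F) j" using book_dd[OF F] Suc by simp
  finally show ?case using Suc by (simp add: EE_def)
qed

definition "Gam = (\<Pi>\<^sub>E c\<in>Off. {lo c..hi c})"

lemma sum_cnt: assumes "\<gamma> \<in> Gam" shows "(\<Sum>g\<le>n. cnt \<gamma> g) = card Off"
proof -
  have "(\<Sum>g\<le>n. cnt \<gamma> g) = (\<Sum>g\<le>n. \<Sum>c\<in>{c\<in>Off. \<gamma> c = g}. 1)" unfolding cnt_def by simp
  also have "\<dots> = (\<Sum>c\<in>Off. 1)"
    using assms lohi fin unfolding Gam_def by (intro sum.group) (auto simp: PiE_iff, force)
  finally show ?thesis by simp
qed

lemma EE_top: assumes "\<gamma> \<in> Gam" shows "EE \<gamma> (Suc n) = NN + 1"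
  using sum_cnt[OF assms] by (simp add: EE_def NN_def lessThan_Suc_atMost)

definition "fib \<gamma> g = {c\<in>Off. \<gamma> c = g}"
definition "blk \<gamma> g = {EE \<gamma> g<..<EE \<gamma> (Suc g)}"
definition "fiber \<gamma> = {F. book F \<and> (\<forall>c\<in>Off. gap F c = \<gamma> c)}"
definition "TT \<gamma> = (\<Pi>\<^sub>E g\<in>{..n}. {f \<in> fib \<gamma> g \<rightarrow>\<^sub>E blk \<gamma> g. bij_betw f (fib \<gamma> g) (blk \<gamma> g)})"
definition "Phi \<gamma> F = (\<lambda>g\<in>{..n}. restrict F (fib \<gamma> g))"

lemma card_TT: "card (TT \<gamma>) = (\<Prod>g\<le>n. fact (cnt \<gamma> g))"
proof -
  have "card (TT \<gamma>) = (\<Prod>g\<le>n. card {f \<in> fib \<gamma> g \<rightarrow>\<^sub>E blk \<gamma> g. bij_betw f (fib \<gamma> g) (blk \<gamma> g)})"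
    unfolding TT_def by (simp add: card_PiE)
  also have "\<dots> = (\<Prod>g\<le>n. fact (cnt \<gamma> g))"
  proof (rule prod.cong[OF refl])
    fix g
    have "card (fib \<gamma> g) = cnt \<gamma> g" by (simp add: fib_def cnt_def)
    moreover have "card (blk \<gamma> g) = cnt \<gamma> g" by (simp add: blk_def EE_def)
    moreover have "finite (fib \<gamma> g)" using fin by (simp add: fib_def)
    ultimately show "card {f \<in> fib \<gamma> g \<rightarrow>\<^sub>E blk \<gamma> g. bij_betw f (fib \<gamma> g) (blk \<gamma> g)} = fact (cnt \<gamma> g)"
      by (metis card_bij_ext finite_greaterThanLessThan blk_def)
  qed
  finally show ?thesis .
qed

lemma cnt_cong: "(\<And>c. c \<in> Off \<Longrightarrow> \<gamma> c = \<delta> c) \<Longrightarrow> cnt \<gamma> = cnt \<delta>"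
  unfolding cnt_def by (intro ext arg_cong[where f=card]) auto

lemma EE_cong: assumes "\<And>c. c \<in> Off \<Longrightarrow> \<gamma> c = \<delta> c" shows "EE \<gamma> = EE \<delta>"
  using cnt_cong[OF assms] unfolding EE_def by (intro ext) simp

lemma fiber_ee: "F \<in> fiber \<gamma> \<Longrightarrow> j \<le> Suc n \<Longrightarrow> ee F j = EE \<gamma> j"
  using book_ee_EE[of F j] EE_cong[of "gap F" \<gamma>] unfolding fiber_def by auto

lemma fiber_block: assumes "F \<in> fiber \<gamma>" "g \<le> n" shows "bij_betw F (fib \<gamma> g) (blk \<gamma> g)"
proof -
  have F: "book F" and gp: "\<forall>c\<in>Off. gap F c = \<gamma> c" using assms unfolding fiber_def by auto
  have "fib \<gamma> g = {c\<in>Off. gap F c = g}" using gp unfolding fib_def by auto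
  moreover have "blk \<gamma> g = {ee F g<..<ee F (Suc g)}"
    using fiber_ee[OF assms(1), of g] fiber_ee[OF assms(1), of "Suc g"] assms(2) by (simp add: blk_def)
  ultimately show ?thesis using book_block[OF F assms(2)] by simp
qed

lemma Phi_in: assumes "F \<in> fiber \<gamma>" shows "Phi \<gamma> F \<in> TT \<gamma>"
proof -
  have "restrict F (fib \<gamma> g) \<in> {f \<in> fib \<gamma> g \<rightarrow>\<^sub>E blk \<gamma> g. bij_betw f (fib \<gamma> g) (blk \<gamma> g)}" if "g \<le> n" for g
  proof -
    have b: "bij_betw F (fib \<gamma> g) (blk \<gamma> g)" using fiber_block[OF assms that] .
    then have "bij_betw (restrict F (fib \<gamma> g)) (fib \<gamma> g) (blk \<gamma> g)" by (subst bij_betw_cong[where g=F]) auto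
    moreover have "restrict F (fib \<gamma> g) \<in> fib \<gamma> g \<rightarrow>\<^sub>E blk \<gamma> g" using b by (auto simp: bij_betw_def)
    ultimately show ?thesis by simp
  qed
  then show ?thesis unfolding TT_def Phi_def by auto
qed

lemma Phi_inj: assumes "\<gamma> \<in> Gam" shows "inj_on (Phi \<gamma>) (fiber \<gamma>)"
proof (rule inj_onI)
  fix F F' assume F: "F \<in> fiber \<gamma>" and F': "F' \<in> fiber \<gamma>" and eq: "Phi \<gamma> F = Phi \<gamma> F'"
  show "F = F'"
  proof
    fix x
    consider "x \<in> Off" | j where "j \<in> {1..n}" "x = diag j" | "x \<notin> Cells" unfolding Cells_def by blast
    then show "F x = F' x"
    proof cases
      case 1
      then have g: "\<gamma> x \<le> n" "x \<in> fib \<gamma> (\<gamma> x)" using assms lohi unfolding Gam_def fib_def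
        by (auto simp: PiE_iff) (meson order_trans)
      have "Phi \<gamma> F (\<gamma> x) x = Phi \<gamma> F' (\<gamma> x) x" using eq by simp
      then show ?thesis using g by (simp add: Phi_def)
    next
      case 2
      then have "F x = ee F j" "F' x = ee F' j" by (auto simp: ee_def)
      then show ?thesis using fiber_ee[OF F, of j] fiber_ee[OF F', of j] 2 by simp
    next
      case 3 then show ?thesis using F F' unfolding fiber_def book_def by auto
    qed
  qed
qed

lemma Phi_surj: assumes G: "\<gamma> \<in> Gam" and phi: "\<phi> \<in> TT \<gamma>" shows "\<phi> \<in> Phi \<gamma> ` fiber \<gamma>"
proof -
  define F where "F x = (if x \<in> Off then \<phi> (\<gamma> x) x else if x \<in> diag ` {1..n} then EE \<gamma> (the_inv_into {1..n} diag x) else 0)" for x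
  have gn: "\<gamma> c \<le> n" "lo c \<le> \<gamma> c" "\<gamma> c \<le> hi c" if "c \<in> Off" for c
    using G lohi[OF that] that unfolding Gam_def by (auto simp: PiE_iff)
  have phig: "\<phi> g \<in> fib \<gamma> g \<rightarrow>\<^sub>E blk \<gamma> g" "bij_betw (\<phi> g) (fib \<gamma> g) (blk \<gamma> g)" if "g \<le> n" for g
    using phi that unfolding TT_def by auto
  have Fd: "F (diag j) = EE \<gamma> j" if "j \<in> {1..n}" for j
    using that disj[OF that] the_inv_into_f_f[OF dinj that] by (simp add: F_def)
  have Fo: "EE \<gamma> (\<gamma> c) < F c \<and> F c < EE \<gamma> (Suc (\<gamma> c))" if "c \<in> Off" for c
  proof -
    have "c \<in> fib \<gamma> (\<gamma> c)" using that by (simp add: fib_def)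
    then have "\<phi> (\<gamma> c) c \<in> blk \<gamma> (\<gamma> c)" using phig(1)[OF gn(1)[OF that]] by auto
    then show ?thesis using that by (simp add: F_def blk_def)
  qed
  have top: "EE \<gamma> (Suc n) = NN + 1" using EE_top[OF G] .
  have inj: "inj_on F Cells"
  proof (rule inj_onI)
    fix x y assume x: "x \<in> Cells" and y: "y \<in> Cells" and e: "F x = F y"
    have offdiag: False if "c \<in> Off" "j \<in> {1..n}" "F c = F (diag j)" for c j
    proof -
      have "F c = EE \<gamma> j" using that Fd by simp
      moreover have "EE \<gamma> j \<le> EE \<gamma> (\<gamma> c) \<or> EE \<gamma> (Suc (\<gamma> c)) \<le> EE \<gamma> j"
        using EE_mono'[of j "\<gamma> c" \<gamma>] EE_mono'[of "Suc (\<gamma> c)" j \<gamma>] by linarith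
      ultimately show False using Fo[OF that(1)] by linarith
    qed
    consider "x \<in> Off" "y \<in> Off" | i where "x \<in> Off" "i \<in> {1..n}" "y = diag i"
      | i where "y \<in> Off" "i \<in> {1..n}" "x = diag i" | i j where "i \<in> {1..n}" "x = diag i" "j \<in> {1..n}" "y = diag j"
      using x y unfolding Cells_def by blast
    then show "x = y"
    proof cases
      case 1
      show ?thesis
      proof (cases "\<gamma> x = \<gamma> y")
        case True
        have "x \<in> fib \<gamma> (\<gamma> x)" "y \<in> fib \<gamma> (\<gamma> x)" using 1 True by (auto simp: fib_def)
        moreover have "inj_on (\<phi> (\<gamma> x)) (fib \<gamma> (\<gamma> x))" using phig(2)[OF gn(1)[OF 1(1)]] by (simp add: bij_betw_def)
        moreover have "\<phi> (\<gamma> x) x = \<phi> (\<gamma> x) y" using e 1 True by (simp add: F_def)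
        ultimately show ?thesis by (auto simp: inj_on_def)
      next
        case False
        then have "Suc (\<gamma> x) \<le> \<gamma> y \<or> Suc (\<gamma> y) \<le> \<gamma> x" by linarith
        then have "EE \<gamma> (Suc (\<gamma> x)) \<le> EE \<gamma> (\<gamma> y) \<or> EE \<gamma> (Suc (\<gamma> y)) \<le> EE \<gamma> (\<gamma> x)"
          using EE_mono' by blast
        then show ?thesis using Fo[OF 1(1)] Fo[OF 1(2)] e by linarith
      qed
    next
      case 2 then show ?thesis using offdiag e by blast
    next
      case 3 then show ?thesis using offdiag e by metis
    next
      case 4
      then have "EE \<gamma> i = EE \<gamma> j" using e Fd by simp
      then have "i = j" using EE_mono[of i j \<gamma>] EE_mono[of j i \<gamma>] by (metis less_irrefl linorder_neqE_nat)
      then show ?thesis using 4 by simp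
    qed
  qed
  have rng: "F ` Cells \<subseteq> {1..NN}"
  proof
    fix v assume "v \<in> F ` Cells"
    then obtain x where x: "x \<in> Cells" "v = F x" by blast
    then consider "x \<in> Off" | j where "j \<in> {1..n}" "x = diag j" unfolding Cells_def by blast
    then show "v \<in> {1..NN}"
    proof cases
      case 1
      have "EE \<gamma> (Suc (\<gamma> x)) \<le> EE \<gamma> (Suc n)" using gn(1)[OF 1] by (intro EE_mono') simp
      then show ?thesis using Fo[OF 1] x top by auto
    next
      case 2
      have "j \<le> EE \<gamma> j" by (simp add: EE_def)
      moreover have "EE \<gamma> j < EE \<gamma> (Suc n)" using 2 by (intro EE_mono) auto
      ultimately show ?thesis using 2 x Fd top by auto
    qed
  qed
  have "card (F ` Cells) = card {1..NN}" using inj card_Cells by (simp add: card_image)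
  then have "F ` Cells = {1..NN}" using rng by (intro card_subset_eq) auto
  then have bij: "bij_betw F Cells {1..NN}" using inj by (simp add: bij_betw_def)
  have zero: "\<forall>c. c \<notin> Cells \<longrightarrow> F c = 0" unfolding Cells_def F_def by auto
  have cons: "\<forall>c\<in>Off. (1 \<le> lo c \<longrightarrow> F (diag (lo c)) < F c) \<and> (hi c < n \<longrightarrow> F c < F (diag (Suc (hi c))))"
  proof (intro ballI conjI impI)
    fix c assume c: "c \<in> Off"
    {
      assume "1 \<le> lo c"
      then have "F (diag (lo c)) = EE \<gamma> (lo c)" using Fd gn[OF c] by simp
      also have "\<dots> \<le> EE \<gamma> (\<gamma> c)" using gn[OF c] by (intro EE_mono') simp
      finally show "F (diag (lo c)) < F c" using Fo[OF c] by simp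
    }
    {
      assume "hi c < n"
      then have "F (diag (Suc (hi c))) = EE \<gamma> (Suc (hi c))" using Fd gn[OF c] by simp
      moreover have "EE \<gamma> (Suc (\<gamma> c)) \<le> EE \<gamma> (Suc (hi c))" using gn[OF c] by (intro EE_mono') simp
      ultimately show "F c < F (diag (Suc (hi c)))" using Fo[OF c] by simp
    }
  qed
  have book: "book F" using bij zero cons unfolding book_def by simp
  have eeE: "ee F j = EE \<gamma> j" if "j \<le> Suc n" for j
    using that Fd top by (auto simp: ee_def EE_def)
  have gp: "gap F c = \<gamma> c" if c: "c \<in> Off" for c
    unfolding gap_def
    by (rule card_below[OF _ gn(1)[OF c]]) (use eeE EE_mono Fo[OF c] gn(1)[OF c] in auto)
  have inf: "F \<in> fiber \<gamma>" using book gp unfolding fiber_def by simp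
  have "Phi \<gamma> F = \<phi>"
  proof
    fix g
    show "Phi \<gamma> F g = \<phi> g"
    proof (cases "g \<le> n")
      case True
      have "restrict F (fib \<gamma> g) = \<phi> g"
      proof
        fix c
        show "restrict F (fib \<gamma> g) c = \<phi> g c"
          using phig(1)[OF True] by (cases "c \<in> fib \<gamma> g") (auto simp: F_def fib_def PiE_def extensional_def)
      qed
      then show ?thesis using True by (simp add: Phi_def)
    next
      case False
      then show ?thesis using phi unfolding TT_def Phi_def by (auto simp: PiE_def extensional_def)
    qed
  qed
  then show ?thesis using inf by blast
qed

lemma card_fiber: assumes "\<gamma> \<in> Gam" shows "card (fiber \<gamma>) = (\<Prod>g\<le>n. fact (cnt \<gamma> g))"
proof -
  have "bij_betw (Phi \<gamma>) (fiber \<gamma>) (TT \<gamma>)"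
    unfolding bij_betw_def using Phi_inj[OF assms] Phi_in Phi_surj[OF assms] by blast
  then show ?thesis using card_TT by (metis bij_betw_same_card)
qed

lemma finite_books: "finite {F. book F}"
proof (rule inj_on_finite[where f="\<lambda>F. restrict F Cells" and B="Cells \<rightarrow>\<^sub>E {1..NN}"])
  show "inj_on (\<lambda>F. restrict F Cells) {F. book F}"
  proof (rule inj_onI)
    fix F F' assume "F \<in> {F. book F}" "F' \<in> {F. book F}" "restrict F Cells = restrict F' Cells"
    then show "F = F'" unfolding book_def by (auto simp: fun_eq_iff restrict_def) metis
  qed
  show "(\<lambda>F. restrict F Cells) ` {F. book F} \<subseteq> Cells \<rightarrow>\<^sub>E {1..NN}"
    using book_range by auto
  show "finite (Cells \<rightarrow>\<^sub>E {1..NN})" using finCells by (intro finite_PiE) auto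
qed

lemma finite_Gam: "finite Gam" unfolding Gam_def using fin by (intro finite_PiE) auto

theorem main:
  fixes t :: "nat \<Rightarrow> real"
  shows "(\<Sum>F\<in>{F. book F}. \<Prod>j\<le>n. t j ^ dd F j / fact (dd F j)) = (\<Prod>c\<in>Off. \<Sum>g=lo c..hi c. t g)"
proof -
  define W where "W F = (\<Prod>j\<le>n. t j ^ dd F j / fact (dd F j))" for F
  have img: "(\<lambda>F. restrict (gap F) Off) ` {F. book F} \<subseteq> Gam"
    using book_gap_range unfolding Gam_def by auto
  have "(\<Sum>F\<in>{F. book F}. W F) = (\<Sum>\<gamma>\<in>Gam. \<Sum>F\<in>{F \<in> {F. book F}. restrict (gap F) Off = \<gamma>}. W F)"
    using finite_books finite_Gam img by (intro sum.group[symmetric]) auto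
  also have "\<dots> = (\<Sum>\<gamma>\<in>Gam. \<Prod>c\<in>Off. t (\<gamma> c))"
  proof (rule sum.cong[OF refl])
    fix \<gamma> assume G: "\<gamma> \<in> Gam"
    have fe: "{F \<in> {F. book F}. restrict (gap F) Off = \<gamma>} = fiber \<gamma>"
      using G unfolding fiber_def Gam_def by (auto simp: PiE_def extensional_def fun_eq_iff restrict_def)
    have WF: "W F = (\<Prod>j\<le>n. t j ^ cnt \<gamma> j / fact (cnt \<gamma> j))" if "F \<in> fiber \<gamma>" for F
    proof -
      have "cnt (gap F) = cnt \<gamma>" using that unfolding fiber_def by (intro cnt_cong) auto
      moreover have "book F" using that unfolding fiber_def by auto
      ultimately show ?thesis unfolding W_def using book_dd by (intro prod.cong) auto
    qed
    have "(\<Sum>F\<in>fiber \<gamma>. W F) = real (card (fiber \<gamma>)) * (\<Prod>j\<le>n. t j ^ cnt \<gamma> j / fact (cnt \<gamma> j))"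
      using WF by simp
    also have "\<dots> = (\<Prod>j\<le>n. fact (cnt \<gamma> j)) * (\<Prod>j\<le>n. t j ^ cnt \<gamma> j / fact (cnt \<gamma> j))"
      using card_fiber[OF G] by simp
    also have "\<dots> = (\<Prod>j\<le>n. t j ^ cnt \<gamma> j)"
      by (subst prod.distrib[symmetric]) (intro prod.cong, auto)
    also have "\<dots> = (\<Prod>j\<le>n. \<Prod>c\<in>{c \<in> Off. \<gamma> c = j}. t (\<gamma> c))"
      unfolding cnt_def by (intro prod.cong) auto
    also have "\<dots> = (\<Prod>c\<in>Off. t (\<gamma> c))"
      using G fin lohi unfolding Gam_def by (intro prod.group) (auto simp: PiE_iff, force)
    finally show "(\<Sum>F\<in>{F \<in> {F. book F}. restrict (gap F) Off = \<gamma>}. W F) = (\<Prod>c\<in>Off. t (\<gamma> c))"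
      using fe by simp
  qed
  also have "\<dots> = (\<Prod>c\<in>Off. \<Sum>g=lo c..hi c. t g)"
    unfolding Gam_def using fin by (intro prod_sum_PiE[symmetric]) auto
  finally show ?thesis unfolding W_def .
qed

end


lemma sum_minus_choose: "(\<Sum>i=1..n. n - i) = n choose 2"
proof (induction n)
  case 0 then show ?case by simp
next
  case (Suc n)
  have "(\<Sum>i=1..Suc n. Suc n - i) = (\<Sum>i=1..n. Suc n - i) + 0" by simp
  also have "(\<Sum>i=1..n. Suc n - i) = (\<Sum>i=1..n. (n - i) + 1)" by (intro sum.cong) auto
  also have "\<dots> = (\<Sum>i=1..n. n - i) + (\<Sum>i=1..n. 1)" by (rule sum.distrib)
  also have "\<dots> = (n choose 2) + n" using Suc by simp
  finally show ?case by (simp add: numeral_2_eq_2)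
qed

lemma page_prod:
  fixes f :: "nat \<Rightarrow> nat \<Rightarrow> 'b::comm_semiring_1"
  shows "(\<Prod>(i,j)\<in>{(i,j). 1\<le>i \<and> i \<le> a + n \<and> 1 \<le> j \<and> j \<le> n + b \<and> i \<le> j + a \<and> i \<noteq> j + a}.
            f (if a < i then i - a else 0) (if j \<le> n then j - 1 else n))
       = (\<Prod>j=1..n. f 0 (j-1))^a * (\<Prod>i=1..n. f i n)^b * f 0 n ^ (a*b) * (\<Prod>i=1..n. \<Prod>j\<in>{i<..n}. f i (j-1))"
proof -
  define h where "h i j = f (if a < i then i - a else 0) (if j \<le> n then j - 1 else n)" for i j
  have Q: "{(i,j). 1\<le>i \<and> i \<le> a + n \<and> 1 \<le> j \<and> j \<le> n + b \<and> i \<le> j + a \<and> i \<noteq> j + a}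
      = Sigma {1..a+n} (\<lambda>i. {j. 1 \<le> j \<and> j \<le> n + b \<and> i < j + a})" by auto
  have "(\<Prod>(i,j)\<in>{(i,j). 1\<le>i \<and> i \<le> a + n \<and> 1 \<le> j \<and> j \<le> n + b \<and> i \<le> j + a \<and> i \<noteq> j + a}. h i j)
      = (\<Prod>i\<in>{1..a+n}. \<Prod>j\<in>{j. 1 \<le> j \<and> j \<le> n + b \<and> i < j + a}. h i j)"
    unfolding Q by (subst prod.Sigma) auto
  also have "{1..a+n} = {1..a} \<union> {a+1..a+n}" by auto
  also have "(\<Prod>i\<in>{1..a} \<union> {a+1..a+n}. \<Prod>j\<in>{j. 1 \<le> j \<and> j \<le> n + b \<and> i < j + a}. h i j)
     = (\<Prod>i\<in>{1..a}. \<Prod>j\<in>{j. 1 \<le> j \<and> j \<le> n + b \<and> i < j + a}. h i j) *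
       (\<Prod>i\<in>{a+1..a+n}. \<Prod>j\<in>{j. 1 \<le> j \<and> j \<le> n + b \<and> i < j + a}. h i j)"
    by (intro prod.union_disjoint) auto
  also have "(\<Prod>i\<in>{1..a}. \<Prod>j\<in>{j. 1 \<le> j \<and> j \<le> n + b \<and> i < j + a}. h i j)
      = ((\<Prod>j=1..n. f 0 (j-1)) * f 0 n ^ b) ^ a"
  proof -
    have "(\<Prod>j\<in>{j. 1 \<le> j \<and> j \<le> n + b \<and> i < j + a}. h i j) = (\<Prod>j=1..n. f 0 (j-1)) * f 0 n ^ b"
      if i: "i \<in> {1..a}" for i
    proof -
      have "{j. 1 \<le> j \<and> j \<le> n + b \<and> i < j + a} = {1..n} \<union> {n<..n+b}" using i by auto
      then have "(\<Prod>j\<in>{j. 1 \<le> j \<and> j \<le> n + b \<and> i < j + a}. h i j) = (\<Prod>j\<in>{1..n}. h i j) * (\<Prod>j\<in>{n<..n+b}. h i j)"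
        by (simp only:) (rule prod.union_disjoint, auto)
      also have "(\<Prod>j\<in>{1..n}. h i j) = (\<Prod>j=1..n. f 0 (j-1))" using i by (intro prod.cong) (auto simp: h_def)
      also have "(\<Prod>j\<in>{n<..n+b}. h i j) = (\<Prod>j\<in>{n<..n+b}. f 0 n)" using i by (intro prod.cong) (auto simp: h_def)
      finally show ?thesis by simp
    qed
    then show ?thesis by simp
  qed
  also have "(\<Prod>i\<in>{a+1..a+n}. \<Prod>j\<in>{j. 1 \<le> j \<and> j \<le> n + b \<and> i < j + a}. h i j)
      = (\<Prod>i\<in>{1..n}. \<Prod>j\<in>{j. 1 \<le> j \<and> j \<le> n + b \<and> i + a < j + a}. h (i + a) j)"
  proof -
    have "{a+1..a+n} = (\<lambda>i. i + a) ` {1..n}" by (auto simp: image_iff)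
    moreover have "inj_on (\<lambda>i. i + a) {1..n}" by (auto simp: inj_on_def)
    ultimately show ?thesis by (simp only: prod.reindex o_def)
  qed
  also have "\<dots> = (\<Prod>i\<in>{1..n}. (\<Prod>j\<in>{i<..n}. f i (j-1)) * f i n ^ b)"
  proof (intro prod.cong refl)
    fix i assume i: "i \<in> {1..n}"
    have "{j. 1 \<le> j \<and> j \<le> n + b \<and> i + a < j + a} = {i<..n} \<union> {n<..n+b}" using i by auto
    then have "(\<Prod>j\<in>{j. 1 \<le> j \<and> j \<le> n + b \<and> i + a < j + a}. h (i+a) j) = (\<Prod>j\<in>{i<..n}. h (i+a) j) * (\<Prod>j\<in>{n<..n+b}. h (i+a) j)"
      by (simp only:) (rule prod.union_disjoint, auto)
    also have "(\<Prod>j\<in>{i<..n}. h (i+a) j) = (\<Prod>j\<in>{i<..n}. f i (j-1))" using i by (intro prod.cong) (auto simp: h_def)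
    also have "(\<Prod>j\<in>{n<..n+b}. h (i+a) j) = (\<Prod>j\<in>{n<..n+b}. f i n)" using i by (intro prod.cong) (auto simp: h_def)
    finally show "(\<Prod>j\<in>{j. 1 \<le> j \<and> j \<le> n + b \<and> i + a < j + a}. h (i+a) j) = (\<Prod>j\<in>{i<..n}. f i (j-1)) * f i n ^ b" by simp
  qed
  finally have C: "(\<Prod>(i,j)\<in>{(i,j). 1\<le>i \<and> i \<le> a + n \<and> 1 \<le> j \<and> j \<le> n + b \<and> i \<le> j + a \<and> i \<noteq> j + a}. h i j)
     = ((\<Prod>j=1..n. f 0 (j-1)) * f 0 n ^ b) ^ a * (\<Prod>i\<in>{1..n}. (\<Prod>j\<in>{i<..n}. f i (j-1)) * f i n ^ b)" .
  have R: "((\<Prod>j=1..n. f 0 (j-1)) * f 0 n ^ b) ^ a * (\<Prod>i\<in>{1..n}. (\<Prod>j\<in>{i<..n}. f i (j-1)) * f i n ^ b)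
     = (\<Prod>j=1..n. f 0 (j-1))^a * (\<Prod>i=1..n. f i n)^b * f 0 n ^ (a*b) * (\<Prod>i=1..n. \<Prod>j\<in>{i<..n}. f i (j-1))"
    by (simp add: prod.distrib power_mult_distrib prod_power_distrib power_mult ac_simps)
       (simp add: power_mult[symmetric] mult.commute)
  have L: "(\<Prod>(i,j)\<in>{(i,j). 1\<le>i \<and> i \<le> a + n \<and> 1 \<le> j \<and> j \<le> n + b \<and> i \<le> j + a \<and> i \<noteq> j + a}.
            f (if a < i then i - a else 0) (if j \<le> n then j - 1 else n)) = (\<Prod>(i,j)\<in>{(i,j). 1\<le>i \<and> i \<le> a + n \<and> 1 \<le> j \<and> j \<le> n + b \<and> i \<le> j + a \<and> i \<noteq> j + a}. h i j)"
    unfolding h_def ..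
  show ?thesis using L C R by (simp only:)
qed


definition Qs :: "nat \<Rightarrow> nat \<Rightarrow> nat \<Rightarrow> (nat \<times> nat) set" where
  "Qs n a b = {(i,j). 1\<le>i \<and> i \<le> a + n \<and> 1 \<le> j \<and> j \<le> n + b \<and> i \<le> j + a \<and> i \<noteq> j + a}"

definition OffS :: "nat \<Rightarrow> nat \<Rightarrow> (nat \<Rightarrow> nat) \<Rightarrow> (nat \<Rightarrow> nat) \<Rightarrow> sb_cell set" where
  "OffS n m r s = (\<Union>k\<in>{1..m}. (\<lambda>(i,j). SOff k i j) ` Qs n (r k) (s k))"

definition lo_sb :: "(nat \<Rightarrow> nat) \<Rightarrow> sb_cell \<Rightarrow> nat" where
  "lo_sb r c = (case c of SOff k i j \<Rightarrow> if r k < i then i - r k else 0 | SDiag _ \<Rightarrow> 0)"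
definition hi_sb :: "nat \<Rightarrow> sb_cell \<Rightarrow> nat" where
  "hi_sb n c = (case c of SOff k i j \<Rightarrow> if j \<le> n then j - 1 else n | SDiag _ \<Rightarrow> 0)"

lemma finite_Qs: "finite (Qs n a b)"
  by (rule finite_subset[of _ "{1..a+n} \<times> {1..n+b}"]) (auto simp: Qs_def)

lemma cells_eq: "sb_cells n m r s = SDiag ` {1..n} \<union> OffS n m r s"
  unfolding sb_cells_def OffS_def Qs_def by auto

lemma OffS_mem: "SOff k i j \<in> OffS n m r s \<longleftrightarrow> k \<in> {1..m} \<and> (i,j) \<in> Qs n (r k) (s k)"
  unfolding OffS_def by auto

lemma prod_OffS:
  fixes f :: "nat \<Rightarrow> nat \<Rightarrow> 'b::comm_semiring_1"
  shows "(\<Prod>c\<in>OffS n m r s. f (lo_sb r c) (hi_sb n c)) =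
    (\<Prod>k=1..m. (\<Prod>j=1..n. f 0 (j-1))^r k * (\<Prod>i=1..n. f i n)^s k * f 0 n ^ (r k * s k) * (\<Prod>i=1..n. \<Prod>j\<in>{i<..n}. f i (j-1)))"
proof -
  have "(\<Prod>c\<in>OffS n m r s. f (lo_sb r c) (hi_sb n c)) =
     (\<Prod>k\<in>{1..m}. \<Prod>c\<in>(\<lambda>(i,j). SOff k i j) ` Qs n (r k) (s k). f (lo_sb r c) (hi_sb n c))"
    unfolding OffS_def by (intro prod.UNION_disjoint) (auto simp: finite_Qs)
  also have "\<dots> = (\<Prod>k\<in>{1..m}. \<Prod>(i,j)\<in>Qs n (r k) (s k). f (if r k < i then i - r k else 0) (if j \<le> n then j - 1 else n))"
  proof (intro prod.cong refl)
    fix k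
    have "inj_on (\<lambda>(i,j). SOff k i j) (Qs n (r k) (s k))" by (auto simp: inj_on_def)
    then show "(\<Prod>c\<in>(\<lambda>(i,j). SOff k i j) ` Qs n (r k) (s k). f (lo_sb r c) (hi_sb n c)) =
       (\<Prod>(i,j)\<in>Qs n (r k) (s k). f (if r k < i then i - r k else 0) (if j \<le> n then j - 1 else n))"
      by (subst prod.reindex) (auto simp: lo_sb_def hi_sb_def case_prod_beta intro!: prod.cong)
  qed
  also have "\<dots> = (\<Prod>k=1..m. (\<Prod>j=1..n. f 0 (j-1))^r k * (\<Prod>i=1..n. f i n)^s k * f 0 n ^ (r k * s k) * (\<Prod>i=1..n. \<Prod>j\<in>{i<..n}. f i (j-1)))"
    unfolding Qs_def by (intro prod.cong refl page_prod)
  finally show ?thesis .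
qed

lemma card_OffS: "card (OffS n m r s) = n * sum r {1..m} + n * sum s {1..m} + (\<Sum>k=1..m. r k * s k) + m * (n choose 2)"
proof -
  have fO: "finite (OffS n m r s)" unfolding OffS_def by (auto simp: finite_Qs)
  have "(2::nat) ^ card (OffS n m r s) = (\<Prod>c\<in>OffS n m r s. (\<lambda>_ _. 2::nat) (lo_sb r c) (hi_sb n c))"
    by simp
  also have "\<dots> = (\<Prod>k=1..m. (2^n)^r k * (2^n)^s k * 2 ^ (r k * s k) * (\<Prod>i=1..n. 2 ^ (n - i)))"
    by (subst prod_OffS) simp
  also have "(\<Prod>i=1..n. (2::nat) ^ (n - i)) = 2 ^ (n choose 2)"
    using sum_minus_choose[of n] by (simp add: power_sum[symmetric])
  also have "(\<Prod>k=1..m. ((2::nat)^n)^r k * (2^n)^s k * 2 ^ (r k * s k) * 2 ^ (n choose 2))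
     = (\<Prod>k=1..m. 2 ^ (n * r k + n * s k + r k * s k + (n choose 2)))"
    by (simp add: power_add power_mult)
  also have "\<dots> = 2 ^ (\<Sum>k=1..m. n * r k + n * s k + r k * s k + (n choose 2))"
    by (simp add: power_sum)
  finally have "card (OffS n m r s) = (\<Sum>k=1..m. n * r k + n * s k + r k * s k + (n choose 2))"
    by (simp add: power_inject_exp)
  then show ?thesis by (simp add: sum.distrib sum_distrib_left)
qed


lemma bk_sb: assumes "0 < m" shows "bk n (OffS n m r s) SDiag (lo_sb r) (hi_sb n)"
proof
  show "finite (OffS n m r s)" unfolding OffS_def by (auto simp: finite_Qs)
  show "inj_on SDiag {1..n}" by (auto simp: inj_on_def)
  show "SDiag j \<notin> OffS n m r s" for j unfolding OffS_def by auto
  show "lo_sb r c \<le> hi_sb n c \<and> hi_sb n c \<le> n" if "c \<in> OffS n m r s" for c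
    using that unfolding OffS_def Qs_def lo_sb_def hi_sb_def by auto
  show "\<exists>c\<in>OffS n m r s. lo_sb r c = j \<and> hi_sb n c = j" if "1 \<le> j" "j < n" for j
  proof
    show "SOff 1 (j + r 1) (j + 1) \<in> OffS n m r s" using that assms by (simp add: OffS_mem Qs_def)
    show "lo_sb r (SOff 1 (j + r 1) (j + 1)) = j \<and> hi_sb n (SOff 1 (j + r 1) (j + 1)) = j"
      using that by (simp add: lo_sb_def hi_sb_def)
  qed
qed

theorem proposition4p11:
  fixes n m :: nat and r s :: "nat \<Rightarrow> nat" and t :: "nat \<Rightarrow> real"
  assumes "0 < n" and "0 < m"
  shows "(\<Sum>\<^sub>\<infinity> d \<in> {..n} \<rightarrow>\<^sub>E (UNIV :: nat set).
            real (card (SB n m r s d)) * (\<Prod>j\<le>n. t j ^ d j / fact (d j)))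
       = (\<Prod>i=1..n. (\<Sum>k<i. t k) ^ (\<Sum>l=1..m. r l) * (\<Sum>k=i..n. t k) ^ (\<Sum>l=1..m. s l))
         * (\<Prod>i=1..m. (\<Sum>k\<le>n. t k) ^ (r i * s i))
         * (\<Prod>i\<in>{1..n}. \<Prod>j\<in>{i<..n}. (\<Sum>k=i..<j. t k) ^ m)"
proof -
  interpret B: bk n "OffS n m r s" SDiag "lo_sb r" "hi_sb n" using bk_sb[OF assms(2)] .
  have cells: "B.Cells = sb_cells n m r s" unfolding B.Cells_def cells_eq ..
  have NN: "B.NN = sb_N n m r s" unfolding B.NN_def sb_N_def card_OffS by (simp add: algebra_simps)
  have sbb: "selberg_book n m r s F \<longleftrightarrow> B.book F" for F
  proof -
    have "(\<forall>k i j. SOff k i j \<in> sb_cells n m r s \<longrightarrow>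
         (r k < i \<longrightarrow> F (SOff k i j) > F (SDiag (i - r k))) \<and>
         (j \<le> n \<longrightarrow> F (SOff k i j) < F (SDiag j))) \<longleftrightarrow>
       (\<forall>c\<in>OffS n m r s. (1 \<le> lo_sb r c \<longrightarrow> F (SDiag (lo_sb r c)) < F c) \<and>
          (hi_sb n c < n \<longrightarrow> F c < F (SDiag (Suc (hi_sb n c)))))"
    proof
      assume a: "\<forall>k i j. SOff k i j \<in> sb_cells n m r s \<longrightarrow>
         (r k < i \<longrightarrow> F (SOff k i j) > F (SDiag (i - r k))) \<and>
         (j \<le> n \<longrightarrow> F (SOff k i j) < F (SDiag j))"
      show "\<forall>c\<in>OffS n m r s. (1 \<le> lo_sb r c \<longrightarrow> F (SDiag (lo_sb r c)) < F c) \<and>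
          (hi_sb n c < n \<longrightarrow> F c < F (SDiag (Suc (hi_sb n c))))"
      proof
        fix c assume c: "c \<in> OffS n m r s"
        then obtain k i j where cc: "c = SOff k i j" "k \<in> {1..m}" "(i,j) \<in> Qs n (r k) (s k)" unfolding OffS_def by auto
        then have "SOff k i j \<in> sb_cells n m r s" using c cells_eq by auto
        then show "(1 \<le> lo_sb r c \<longrightarrow> F (SDiag (lo_sb r c)) < F c) \<and>
          (hi_sb n c < n \<longrightarrow> F c < F (SDiag (Suc (hi_sb n c))))"
          using a cc by (auto simp: lo_sb_def hi_sb_def Qs_def)
      qed
    next
      assume a: "\<forall>c\<in>OffS n m r s. (1 \<le> lo_sb r c \<longrightarrow> F (SDiag (lo_sb r c)) < F c) \<and>
          (hi_sb n c < n \<longrightarrow> F c < F (SDiag (Suc (hi_sb n c))))"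
      show "\<forall>k i j. SOff k i j \<in> sb_cells n m r s \<longrightarrow>
         (r k < i \<longrightarrow> F (SOff k i j) > F (SDiag (i - r k))) \<and>
         (j \<le> n \<longrightarrow> F (SOff k i j) < F (SDiag j))"
      proof (intro allI impI)
        fix k i j assume "SOff k i j \<in> sb_cells n m r s"
        then have c: "SOff k i j \<in> OffS n m r s" using cells_eq by auto
        then have q: "(i,j) \<in> Qs n (r k) (s k)" by (simp add: OffS_mem)
        note ac = a[rule_format, OF c]
        show "(r k < i \<longrightarrow> F (SOff k i j) > F (SDiag (i - r k))) \<and> (j \<le> n \<longrightarrow> F (SOff k i j) < F (SDiag j))"
          using ac q by (auto simp: lo_sb_def hi_sb_def Qs_def)
      qed
    qed
    then show ?thesis unfolding selberg_book_def B.book_def cells NN by simp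
  qed
  have sbe: "sb_e n m r s F = B.ee F" for F
    unfolding sb_e_def B.ee_def NN by (intro ext) simp
  have SBeq: "SB n m r s d = {F. B.book F \<and> (\<forall>j\<le>n. d j = B.dd F j)}" for d
    unfolding SB_def sbb sbe B.dd_def by simp
  define W where "W d = (\<Prod>j\<le>n. t j ^ d j / fact (d j))" for d :: "nat \<Rightarrow> nat"
  define D where "D = {..n} \<rightarrow>\<^sub>E (UNIV :: nat set)"
  define R where "R = (\<lambda>F. restrict (B.dd F) {..n}) ` {F. B.book F}"
  have fR: "finite R" unfolding R_def using B.finite_books by simp
  have RD: "R \<subseteq> D" unfolding R_def D_def by (auto intro!: restrict_PiE_iff[THEN iffD2])
  have SBR: "SB n m r s d = {F \<in> {F. B.book F}. restrict (B.dd F) {..n} = d}" if "d \<in> D" for d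
    using that unfolding SBeq D_def by (auto simp: PiE_def extensional_def fun_eq_iff restrict_def)
  have "(\<Sum>\<^sub>\<infinity> d \<in> D. real (card (SB n m r s d)) * W d) = (\<Sum>\<^sub>\<infinity> d \<in> R. real (card (SB n m r s d)) * W d)"
  proof (rule infsum_cong_neutral)
    fix d assume "d \<in> D - R"
    then have "SB n m r s d = {}" using SBR unfolding R_def by auto
    then show "real (card (SB n m r s d)) * W d = 0" by simp
  qed (use RD in auto)
  also have "\<dots> = (\<Sum>d\<in>R. real (card (SB n m r s d)) * W d)" using fR by simp
  also have "\<dots> = (\<Sum>d\<in>R. \<Sum>F\<in>{F \<in> {F. B.book F}. restrict (B.dd F) {..n} = d}. W (B.dd F))"
  proof (intro sum.cong refl)
    fix d assume d: "d \<in> R"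
    have "W (B.dd F) = W d" if "F \<in> {F \<in> {F. B.book F}. restrict (B.dd F) {..n} = d}" for F
      using that unfolding W_def by (auto intro!: prod.cong)
    then show "real (card (SB n m r s d)) * W d = (\<Sum>F\<in>{F \<in> {F. B.book F}. restrict (B.dd F) {..n} = d}. W (B.dd F))"
      using SBR[of d] d RD by auto
  qed
  also have "\<dots> = (\<Sum>F\<in>{F. B.book F}. W (B.dd F))"
    using fR B.finite_books unfolding R_def by (intro sum.group) auto
  also have "\<dots> = (\<Prod>c\<in>OffS n m r s. \<Sum>g=lo_sb r c..hi_sb n c. t g)"
    unfolding W_def by (rule B.main)
  also have "\<dots> = (\<Prod>k=1..m. (\<Prod>j=1..n. (\<Sum>g=0..j-1. t g))^r k * (\<Prod>i=1..n. (\<Sum>g=i..n. t g))^s k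
        * (\<Sum>g=0..n. t g) ^ (r k * s k) * (\<Prod>i=1..n. \<Prod>j\<in>{i<..n}. (\<Sum>g=i..j-1. t g)))"
    by (rule prod_OffS)
  also have "\<dots> = (\<Prod>k=1..m. (\<Prod>j=1..n. (\<Sum>g<j. t g))^r k * (\<Prod>i=1..n. (\<Sum>g=i..n. t g))^s k
        * (\<Sum>g\<le>n. t g) ^ (r k * s k) * (\<Prod>i=1..n. \<Prod>j\<in>{i<..n}. (\<Sum>g=i..<j. t g)))"
  proof -
    have 1: "(\<Prod>j=1..n. (\<Sum>g\<in>{..j-1}. t g)) = (\<Prod>j=1..n. (\<Sum>g<j. t g))"
    proof (intro prod.cong refl)
      fix j :: nat assume "j \<in> {1..n}"
      then have "{..j-1} = {..<j}" by auto
      then show "(\<Sum>g\<in>{..j-1}. t g) = (\<Sum>g<j. t g)" by simp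
    qed
    have 2: "(\<Prod>i=1..n. \<Prod>j\<in>{i<..n}. (\<Sum>g=i..j-1. t g)) = (\<Prod>i=1..n. \<Prod>j\<in>{i<..n}. (\<Sum>g=i..<j. t g))"
    proof (intro prod.cong refl)
      fix i j :: nat assume "j \<in> {i<..n}"
      then have "{i..j-1} = {i..<j}" by auto
      then show "(\<Sum>g=i..j-1. t g) = (\<Sum>g=i..<j. t g)" by simp
    qed
    show ?thesis unfolding atLeast0AtMost unfolding 1 2 ..
  qed
  also have "\<dots> = (\<Prod>i=1..n. (\<Sum>k<i. t k) ^ (\<Sum>l=1..m. r l) * (\<Sum>k=i..n. t k) ^ (\<Sum>l=1..m. s l))
         * (\<Prod>i=1..m. (\<Sum>k\<le>n. t k) ^ (r i * s i))
         * (\<Prod>i\<in>{1..n}. \<Prod>j\<in>{i<..n}. (\<Sum>k=i..<j. t k) ^ m)"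
  proof -
    define A where "A = (\<Prod>j=1..n. (\<Sum>g<j. t g))"
    define Bp where "Bp = (\<Prod>i=1..n. (\<Sum>g=i..n. t g))"
    define C where "C = (\<Sum>g\<le>n. t g)"
    define Dp where "Dp = (\<Prod>i=1..n. \<Prod>j\<in>{i<..n}. (\<Sum>g=i..<j. t g))"
    have "(\<Prod>k=1..m. A^r k * Bp^s k * C ^ (r k * s k) * Dp)
        = (\<Prod>k=1..m. A^r k) * (\<Prod>k=1..m. Bp^s k) * (\<Prod>k=1..m. C ^ (r k * s k)) * (\<Prod>k=1..m. Dp)"
      by (simp add: prod.distrib)
    also have "(\<Prod>k=1..m. A^r k) = A ^ (\<Sum>l=1..m. r l)" by (simp add: power_sum)
    also have "(\<Prod>k=1..m. Bp^s k) = Bp ^ (\<Sum>l=1..m. s l)" by (simp add: power_sum)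
    also have "(\<Prod>k=1..m. Dp) = Dp ^ m" by simp
    also have "A ^ (\<Sum>l=1..m. r l) * Bp ^ (\<Sum>l=1..m. s l) = (\<Prod>i=1..n. (\<Sum>k<i. t k) ^ (\<Sum>l=1..m. r l) * (\<Sum>k=i..n. t k) ^ (\<Sum>l=1..m. s l))"
      unfolding A_def Bp_def by (simp add: prod_power_distrib prod.distrib)
    also have "Dp ^ m = (\<Prod>i\<in>{1..n}. \<Prod>j\<in>{i<..n}. (\<Sum>k=i..<j. t k) ^ m)"
      unfolding Dp_def by (simp add: prod_power_distrib)
    finally show ?thesis unfolding A_def Bp_def C_def Dp_def by (simp add: ac_simps)
  qed
  finally show ?thesis unfolding W_def D_def .
qed

end
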